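(* Let $P$ be (the right-angled hyperbolic realization of) the composition of compact right-angled hyperbolic polyhedra $P_1$ and $P_2$ along $k$-gonal faces $F_1\subset P_1$, $F_2\subset P_2$. Then $$\Gamma_P \cong \Gamma_{(P_1,F_1)} *_G \Gamma_{(P_2,F_2)}.$$ Here $G$ denotes $\Gamma_{F_1}\cong\Gamma_{F_2}$, embedded in $\Gamma_{(P_1,F_1)}$ and $\Gamma_{(P_2,F_2)}$ as these subgroups and identified with each other via the isomorphism induced by the face identification $F_1\cong F_2$.
   Context: For a compact right-angled hyperbolic polyhedron $P$ with faces $F_1,\dots,F_m$, the reflection group $\Gamma_P$ is generated by the reflections $r_i$ in the planes supporting the faces $F_i$. It has presentation $$\langle r_1,\dots,r_m \mid r_i^2=1,\ (r_ir_j)^2=1 \text{ whenever } F_i,F_j \text{ are adjacent}\rangle.$$ For a face $F$ of $P$, $\Gamma_{(P,F)}$ is the subgroup generated by reflections in all faces of $P$ other than $F$. For $i=1,2$, $\Gamma_{F_i}\subset \Gamma_{(P_i,F_i)}$ is the subgroup generated by the reflections in the $k$ faces of $P_i$ adjacent to $F_i$; it is the reflection group of a right-angled $k$-gon. Composition: glue $P_1,P_2$ along $F_1,F_2$ via a combinatorial isomorphism, delete the interiors of the $k$ edges of the identified face, and demote their endpoints to non-vertices. Faces adjacent to $F_1$ merge with the corresponding faces adjacent to $F_2$. The result is realizable as a right-angled hyperbolic polyhedron. *)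

theory Defs
  imports "HOL-Algebra.Algebra"
begin

text \<open>The group with presentation < r_v (v in V) | r_v^2 = 1, (r_u r_v)^2 = 1 for E u v >
  is built as the quotient of the words over V by the congruence generated by the
  relators (all generators are involutions, so positive words suffice).\<close>

inductive racg_eq :: "'a set \<Rightarrow> ('a \<Rightarrow> 'a \<Rightarrow> bool) \<Rightarrow> 'a list \<Rightarrow> 'a list \<Rightarrow> bool"
  for V :: "'a set" and E :: "'a \<Rightarrow> 'a \<Rightarrow> bool" where
  refl: "set xs \<subseteq> V \<Longrightarrow> racg_eq V E xs xs"
| sym: "racg_eq V E xs ys \<Longrightarrow> racg_eq V E ys xs"
| trans: "racg_eq V E xs ys \<Longrightarrow> racg_eq V E ys zs \<Longrightarrow> racg_eq V E xs zs"
| cancel_sq: "set xs \<subseteq> V \<Longrightarrow> set ys \<subseteq> V \<Longrightarrow> a \<in> V \<Longrightarrow>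
     racg_eq V E (xs @ [a, a] @ ys) (xs @ ys)"
| cancel_comm: "set xs \<subseteq> V \<Longrightarrow> set ys \<subseteq> V \<Longrightarrow> a \<in> V \<Longrightarrow> b \<in> V \<Longrightarrow> E a b \<Longrightarrow>
     racg_eq V E (xs @ [a, b, a, b] @ ys) (xs @ ys)"

definition racg_class :: "'a set \<Rightarrow> ('a \<Rightarrow> 'a \<Rightarrow> bool) \<Rightarrow> 'a list \<Rightarrow> 'a list set" where
  "racg_class V E xs = {ys. racg_eq V E xs ys}"

definition racg :: "'a set \<Rightarrow> ('a \<Rightarrow> 'a \<Rightarrow> bool) \<Rightarrow> 'a list set monoid" where
  "racg V E = \<lparr>carrier = {racg_class V E xs | xs. set xs \<subseteq> V},
               monoid.mult = (\<lambda>S T. {zs. \<exists>xs\<in>S. \<exists>ys\<in>T. racg_eq V E (xs @ ys) zs}),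
               one = racg_class V E []\<rparr>"

definition racg_gen :: "'a set \<Rightarrow> ('a \<Rightarrow> 'a \<Rightarrow> bool) \<Rightarrow> 'a \<Rightarrow> 'a list set" where
  "racg_gen V E v = racg_class V E [v]"

definition racg_induced :: "'b set \<Rightarrow> ('b \<Rightarrow> 'b \<Rightarrow> bool) \<Rightarrow> ('a \<Rightarrow> 'b) \<Rightarrow> 'a list set \<Rightarrow> 'b list set" where
  "racg_induced V E m S = {zs. \<exists>xs\<in>S. racg_eq V E (map m xs) zs}"

text \<open>Adjacency of the sides of a k-gon whose sides are labelled 0..k-1 in cyclic order.\<close>
definition cyc_adj :: "nat \<Rightarrow> nat \<Rightarrow> nat \<Rightarrow> bool" where
  "cyc_adj k i j \<longleftrightarrow> i < k \<and> j < k \<and> (j = Suc i mod k \<or> i = Suc j mod k)"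

definition face_structure :: "'a set \<Rightarrow> ('a \<Rightarrow> 'a \<Rightarrow> bool) \<Rightarrow> bool" where
  "face_structure V E \<longleftrightarrow> finite V \<and> (\<forall>a b. E a b \<longrightarrow> a \<in> V \<and> b \<in> V \<and> a \<noteq> b \<and> E b a)"

text \<open>F is a k-gonal face whose adjacent faces, in cyclic order, are c 0, ..., c (k-1);
  two faces adjacent to F are adjacent to each other exactly when they are cyclically
  consecutive (as in a compact right-angled polyhedron: no prismatic 3-circuits).\<close>
definition kgon_face :: "'a set \<Rightarrow> ('a \<Rightarrow> 'a \<Rightarrow> bool) \<Rightarrow> 'a \<Rightarrow> nat \<Rightarrow> (nat \<Rightarrow> 'a) \<Rightarrow> bool" where
  "kgon_face V E F k c \<longleftrightarrow> F \<in> V \<and> inj_on c {..<k} \<and> {a. E F a} = c ` {..<k} \<and>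
     (\<forall>i<k. \<forall>j<k. E (c i) (c j) \<longleftrightarrow> cyc_adj k i j)"

text \<open>Composition of P1 and P2 along F1 and F2, where the face identification sends the
  face c1 j adjacent to F1 to the face c2 j adjacent to F2.  Faces of the composition:
  faces of P1 other than F1 (tagged Inl; the faces c1 j stand for the merged faces) and
  faces of P2 other than F2 and not adjacent to F2 (tagged Inr).\<close>
definition comp_map2 :: "nat \<Rightarrow> (nat \<Rightarrow> 'a) \<Rightarrow> (nat \<Rightarrow> 'b) \<Rightarrow> 'b \<Rightarrow> 'a + 'b" where
  "comp_map2 k c1 c2 y = (if \<exists>j<k. y = c2 j then Inl (c1 (THE j. j < k \<and> y = c2 j)) else Inr y)"

definition comp_faces :: "'a set \<Rightarrow> 'a \<Rightarrow> 'b set \<Rightarrow> 'b \<Rightarrow> nat \<Rightarrow> (nat \<Rightarrow> 'b) \<Rightarrow> ('a + 'b) set" where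
  "comp_faces V1 F1 V2 F2 k c2 = Inl ` (V1 - {F1}) \<union> Inr ` (V2 - {F2} - c2 ` {..<k})"

definition comp_adj :: "'a set \<Rightarrow> ('a \<Rightarrow> 'a \<Rightarrow> bool) \<Rightarrow> 'a \<Rightarrow> 'b set \<Rightarrow> ('b \<Rightarrow> 'b \<Rightarrow> bool) \<Rightarrow> 'b
     \<Rightarrow> nat \<Rightarrow> (nat \<Rightarrow> 'a) \<Rightarrow> (nat \<Rightarrow> 'b) \<Rightarrow> 'a + 'b \<Rightarrow> 'a + 'b \<Rightarrow> bool" where
  "comp_adj V1 E1 F1 V2 E2 F2 k c1 c2 x y \<longleftrightarrow>
     (\<exists>a b. a \<in> V1 - {F1} \<and> b \<in> V1 - {F1} \<and> E1 a b \<and> x = Inl a \<and> y = Inl b) \<or>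
     (\<exists>a b. a \<in> V2 - {F2} \<and> b \<in> V2 - {F2} \<and> E2 a b \<and>
        x = comp_map2 k c1 c2 a \<and> y = comp_map2 k c1 c2 b)"

end

theory Submission
  imports Defs
begin


lemma racg_eq_set: "racg_eq V E xs ys \<Longrightarrow> set xs \<subseteq> V \<and> set ys \<subseteq> V"
  by (induction rule: racg_eq.induct) auto

lemma racg_eq_app_l: "racg_eq V E xs ys \<Longrightarrow> set zs \<subseteq> V \<Longrightarrow> racg_eq V E (zs@xs) (zs@ys)"
proof (induction rule: racg_eq.induct)
  case (refl xs) then show ?case by (intro racg_eq.refl) auto
next
  case (sym xs ys) then show ?case by (auto intro: racg_eq.sym)
next
  case (trans xs ys zs) then show ?case by (meson racg_eq.trans)
next
  case (cancel_sq xs ys a) then show ?case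
    using racg_eq.cancel_sq[of "zs@xs" V ys a E] by simp
next
  case (cancel_comm xs ys a b) then show ?case
    using racg_eq.cancel_comm[of "zs@xs" V ys a b E] by simp
qed

lemma racg_eq_app_r: "racg_eq V E xs ys \<Longrightarrow> set zs \<subseteq> V \<Longrightarrow> racg_eq V E (xs@zs) (ys@zs)"
proof (induction rule: racg_eq.induct)
  case (refl xs) then show ?case by (intro racg_eq.refl) auto
next
  case (sym xs ys) then show ?case by (auto intro: racg_eq.sym)
next
  case (trans xs ys zs) then show ?case by (meson racg_eq.trans)
next
  case (cancel_sq xs ys a) then show ?case
    using racg_eq.cancel_sq[of xs V "ys@zs" a E] by simp
next
  case (cancel_comm xs ys a b) then show ?case
    using racg_eq.cancel_comm[of xs V "ys@zs" a b E] by simp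
qed

lemma racg_eq_app: "racg_eq V E xs xs' \<Longrightarrow> racg_eq V E ys ys' \<Longrightarrow> racg_eq V E (xs@ys) (xs'@ys')"
  by (meson racg_eq.trans racg_eq_app_l racg_eq_app_r racg_eq_set)

lemma class_eq: "set xs \<subseteq> V \<Longrightarrow> set ys \<subseteq> V \<Longrightarrow>
   (racg_class V E xs = racg_class V E ys) \<longleftrightarrow> racg_eq V E xs ys"
proof
  assume "set xs \<subseteq> V" "set ys \<subseteq> V" "racg_class V E xs = racg_class V E ys"
  then have "ys \<in> racg_class V E xs" by (auto simp: racg_class_def intro: racg_eq.refl)
  then show "racg_eq V E xs ys" by (simp add: racg_class_def)
next
  assume "racg_eq V E xs ys"
  then show "racg_class V E xs = racg_class V E ys"
    by (auto simp: racg_class_def intro: racg_eq.trans racg_eq.sym)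
qed

lemma racg_mult: "set xs \<subseteq> V \<Longrightarrow> set ys \<subseteq> V \<Longrightarrow>
  racg_class V E xs \<otimes>\<^bsub>racg V E\<^esub> racg_class V E ys = racg_class V E (xs@ys)"
  unfolding racg_def racg_class_def
  by (auto intro: racg_eq.trans racg_eq_app racg_eq.refl racg_eq.sym)

lemma racg_carrier: "x \<in> carrier (racg V E) \<longleftrightarrow> (\<exists>xs. set xs \<subseteq> V \<and> x = racg_class V E xs)"
  by (auto simp: racg_def)

lemma racg_one: "\<one>\<^bsub>racg V E\<^esub> = racg_class V E []"
  by (simp add: racg_def)

lemma rev_cancel: "set xs \<subseteq> V \<Longrightarrow> racg_eq V E (rev xs @ xs) []"
proof (induction xs)
  case Nil then show ?case by (auto intro: racg_eq.refl)
next
  case (Cons a xs)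
  then have "racg_eq V E (rev xs @ [a,a] @ xs) (rev xs @ xs)"
    by (intro racg_eq.cancel_sq) auto
  with Cons show ?case by (auto intro: racg_eq.trans)
qed

lemma racg_group: "group (racg V E)"
proof (rule groupI)
  fix x y assume "x \<in> carrier (racg V E)" "y \<in> carrier (racg V E)"
  then show "x \<otimes>\<^bsub>racg V E\<^esub> y \<in> carrier (racg V E)"
  proof -
    obtain xs ys where "set xs \<subseteq> V" "x = racg_class V E xs" "set ys \<subseteq> V" "y = racg_class V E ys"
      using \<open>x \<in> carrier (racg V E)\<close> \<open>y \<in> carrier (racg V E)\<close> by (auto simp: racg_carrier)
    then show ?thesis by (auto simp: racg_carrier racg_mult intro!: exI[of _ "xs @ ys"])
  qed
next
  show "\<one>\<^bsub>racg V E\<^esub> \<in> carrier (racg V E)" by (auto simp: racg_carrier racg_one intro!: exI[of _ "[]"])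
next
  fix x y z assume "x \<in> carrier (racg V E)" "y \<in> carrier (racg V E)" "z \<in> carrier (racg V E)"
  then show "x \<otimes>\<^bsub>racg V E\<^esub> y \<otimes>\<^bsub>racg V E\<^esub> z = x \<otimes>\<^bsub>racg V E\<^esub> (y \<otimes>\<^bsub>racg V E\<^esub> z)"
    by (auto simp: racg_carrier racg_mult)
next
  fix x assume "x \<in> carrier (racg V E)"
  then show "\<one>\<^bsub>racg V E\<^esub> \<otimes>\<^bsub>racg V E\<^esub> x = x"
    by (auto simp: racg_carrier racg_mult racg_one)
next
  fix x assume "x \<in> carrier (racg V E)"
  then obtain xs where xs: "set xs \<subseteq> V" "x = racg_class V E xs" by (auto simp: racg_carrier)
  have "racg_class V E (rev xs) \<otimes>\<^bsub>racg V E\<^esub> x = \<one>\<^bsub>racg V E\<^esub>"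
    using xs rev_cancel[OF xs(1), of E] by (simp add: racg_mult racg_one class_eq)
  moreover have "racg_class V E (rev xs) \<in> carrier (racg V E)" using xs by (auto simp: racg_carrier intro!: exI[of _ "rev xs"])
  ultimately show "\<exists>y\<in>carrier (racg V E). y \<otimes>\<^bsub>racg V E\<^esub> x = \<one>\<^bsub>racg V E\<^esub>" by blast
qed

definition ev :: "('h,'m) monoid_scheme \<Rightarrow> ('a \<Rightarrow> 'h) \<Rightarrow> 'a list \<Rightarrow> 'h" where
  "ev H m xs = foldr (\<lambda>a r. m a \<otimes>\<^bsub>H\<^esub> r) xs \<one>\<^bsub>H\<^esub>"

lemma ev_simps[simp]: "ev H m [] = \<one>\<^bsub>H\<^esub>" "ev H m (a#xs) = m a \<otimes>\<^bsub>H\<^esub> ev H m xs"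
  by (simp_all add: ev_def)

lemma ev_closed: "group H \<Longrightarrow> m ` set xs \<subseteq> carrier H \<Longrightarrow> ev H m xs \<in> carrier H"
  by (induction xs) (auto intro: group.is_monoid monoid.m_closed monoid.one_closed)

lemma ev_append: "group H \<Longrightarrow> m ` set xs \<subseteq> carrier H \<Longrightarrow> m ` set ys \<subseteq> carrier H \<Longrightarrow>
   ev H m (xs@ys) = ev H m xs \<otimes>\<^bsub>H\<^esub> ev H m ys"
proof (induction xs)
  case Nil then show ?case by (simp add: ev_closed group.is_monoid monoid.l_one)
next
  case (Cons a xs) then show ?case
    by (simp add: ev_closed group.is_monoid monoid.m_assoc)
qed

definition rel_ok :: "'a set \<Rightarrow> ('a \<Rightarrow> 'a \<Rightarrow> bool) \<Rightarrow> ('h,'m) monoid_scheme \<Rightarrow> ('a \<Rightarrow> 'h) \<Rightarrow> bool" where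
  "rel_ok V E H m \<longleftrightarrow> m ` V \<subseteq> carrier H \<and> (\<forall>v\<in>V. m v \<otimes>\<^bsub>H\<^esub> m v = \<one>\<^bsub>H\<^esub>) \<and>
     (\<forall>u v. u \<in> V \<longrightarrow> v \<in> V \<longrightarrow> E u v \<longrightarrow> m u \<otimes>\<^bsub>H\<^esub> m v \<otimes>\<^bsub>H\<^esub> (m u \<otimes>\<^bsub>H\<^esub> m v) = \<one>\<^bsub>H\<^esub>)"

lemma rel_ok_cl: "rel_ok V E H m \<Longrightarrow> set xs \<subseteq> V \<Longrightarrow> m ` set xs \<subseteq> carrier H"
  by (auto simp: rel_ok_def)

lemma ev_resp: assumes H: "group H" and ok: "rel_ok V E H m"
  shows "racg_eq V E xs ys \<Longrightarrow> ev H m xs = ev H m ys"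
proof (induction rule: racg_eq.induct)
  case (cancel_sq xs ys a)
  have c: "m ` V \<subseteq> carrier H" using ok by (simp add: rel_ok_def)
  interpret group H by (rule H)
  have "ev H m (xs @ [a, a] @ ys) = ev H m xs \<otimes>\<^bsub>H\<^esub> ((m a \<otimes>\<^bsub>H\<^esub> m a) \<otimes>\<^bsub>H\<^esub> ev H m ys)"
  proof -
    have *: "m ` set xs \<subseteq> carrier H" "m ` set ys \<subseteq> carrier H" "m a \<in> carrier H"
      using cancel_sq c by auto
    have "ev H m (xs @ [a, a] @ ys) = ev H m xs \<otimes>\<^bsub>H\<^esub> ev H m ([a,a] @ ys)"
      using * by (intro ev_append[OF H]) auto
    then show ?thesis using * by (simp add: ev_closed[OF H] m_assoc)
  qed
  also have "\<dots> = ev H m (xs @ ys)"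
    using cancel_sq c ok by (simp add: ev_append[OF H] ev_closed[OF H] rel_ok_cl rel_ok_def)
  finally show ?case .
next
  case (cancel_comm xs ys a b)
  have c: "m ` V \<subseteq> carrier H" using ok by (simp add: rel_ok_def)
  interpret group H by (rule H)
  have "ev H m (xs @ [a, b, a, b] @ ys) = ev H m xs \<otimes>\<^bsub>H\<^esub> ((m a \<otimes>\<^bsub>H\<^esub> m b \<otimes>\<^bsub>H\<^esub> (m a \<otimes>\<^bsub>H\<^esub> m b)) \<otimes>\<^bsub>H\<^esub> ev H m ys)"
  proof -
    have *: "m ` set xs \<subseteq> carrier H" "m ` set ys \<subseteq> carrier H" "m a \<in> carrier H" "m b \<in> carrier H"
      using cancel_comm c by auto
    have "ev H m (xs @ [a, b, a, b] @ ys) = ev H m xs \<otimes>\<^bsub>H\<^esub> ev H m ([a,b,a,b] @ ys)"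
      using * by (intro ev_append[OF H]) auto
    then show ?thesis using * by (simp add: ev_closed[OF H] m_assoc)
  qed
  also have "\<dots> = ev H m (xs @ ys)"
    using cancel_comm c ok by (simp add: ev_append[OF H] ev_closed[OF H] rel_ok_cl rel_ok_def)
  finally show ?case .
qed auto

definition lift :: "'a set \<Rightarrow> ('h,'m) monoid_scheme \<Rightarrow> ('a \<Rightarrow> 'h) \<Rightarrow> 'a list set \<Rightarrow> 'h" where
  "lift V H m S = ev H m (SOME xs. xs \<in> S)"

lemma lift_class: assumes H: "group H" and ok: "rel_ok V E H m" and xs: "set xs \<subseteq> V"
  shows "lift V H m (racg_class V E xs) = ev H m xs"
proof -
  have "xs \<in> racg_class V E xs" using xs by (simp add: racg_class_def racg_eq.refl)
  then have "(SOME ys. ys \<in> racg_class V E xs) \<in> racg_class V E xs" by (rule someI)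
  then have "racg_eq V E xs (SOME ys. ys \<in> racg_class V E xs)" by (simp add: racg_class_def)
  then show ?thesis unfolding lift_def using ev_resp[OF H ok] by metis
qed

lemma lift_hom: assumes H: "group H" and ok: "rel_ok V E H m"
  shows "lift V H m \<in> hom (racg V E) H"
proof (rule homI)
  have c: "m ` V \<subseteq> carrier H" using ok by (simp add: rel_ok_def)
  fix x assume "x \<in> carrier (racg V E)"
  then show "lift V H m x \<in> carrier H" using c
  proof -
    obtain xs where "set xs \<subseteq> V" "x = racg_class V E xs" using \<open>x \<in> carrier (racg V E)\<close> by (auto simp: racg_carrier)
    then show ?thesis using ok by (simp add: lift_class[OF H ok] ev_closed[OF H] rel_ok_cl)
  qed
next
  have c: "m ` V \<subseteq> carrier H" using ok by (simp add: rel_ok_def)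
  fix x y assume "x \<in> carrier (racg V E)" "y \<in> carrier (racg V E)"
  then show "lift V H m (x \<otimes>\<^bsub>racg V E\<^esub> y) = lift V H m x \<otimes>\<^bsub>H\<^esub> lift V H m y"
    using ok by (auto simp: racg_carrier racg_mult lift_class[OF H ok] ev_append[OF H] rel_ok_cl)
qed

lemma lift_gen: assumes H: "group H" and ok: "rel_ok V E H m" and v: "v \<in> V"
  shows "lift V H m (racg_gen V E v) = m v"
proof -
  have "m v \<in> carrier H" using ok v by (auto simp: rel_ok_def)
  then show ?thesis using v lift_class[OF H ok, of "[v]"]
    by (simp add: racg_gen_def monoid.r_one[OF group.is_monoid[OF H]])
qed

lemma racg_cons: "a \<in> V \<Longrightarrow> set xs \<subseteq> V \<Longrightarrow>
  racg_class V E (a#xs) = racg_gen V E a \<otimes>\<^bsub>racg V E\<^esub> racg_class V E xs"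
proof -
  assume a: "a \<in> V" "set xs \<subseteq> V"
  have "racg_class V E (a#xs) = racg_class V E ([a]@xs)" by simp
  also have "\<dots> = racg_class V E [a] \<otimes>\<^bsub>racg V E\<^esub> racg_class V E xs"
    by (rule racg_mult[symmetric]) (use a in auto)
  finally show ?thesis by (simp add: racg_gen_def)
qed

lemma gen_carrier: "v \<in> V \<Longrightarrow> racg_gen V E v \<in> carrier (racg V E)"
  by (auto simp: racg_carrier racg_gen_def intro!: exI[of _ "[v]"])

lemma hom_unique: assumes H: "group H" and f: "f \<in> hom (racg V E) H" and g: "g \<in> hom (racg V E) H"
  and eq: "\<And>v. v \<in> V \<Longrightarrow> f (racg_gen V E v) = g (racg_gen V E v)"
  and x: "x \<in> carrier (racg V E)"
  shows "f x = g x"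
proof -
  obtain xs where xs: "set xs \<subseteq> V" "x = racg_class V E xs" using x by (auto simp: racg_carrier)
  have "f (racg_class V E xs) = g (racg_class V E xs)" using xs(1)
  proof (induction xs)
    case Nil then show ?case
      using hom_one[OF f racg_group H] hom_one[OF g racg_group H] by (simp add: racg_one)
  next
    case (Cons a xs)
    have ga: "racg_gen V E a \<in> carrier (racg V E)" "racg_class V E xs \<in> carrier (racg V E)"
      using Cons.prems gen_carrier[of a V E] by (auto simp: racg_carrier)
    have "f (racg_class V E (a#xs)) = f (racg_gen V E a) \<otimes>\<^bsub>H\<^esub> f (racg_class V E xs)"
      using Cons.prems ga by (simp add: racg_cons hom_mult[OF f])
    also have "\<dots> = g (racg_gen V E a) \<otimes>\<^bsub>H\<^esub> g (racg_class V E xs)"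
      using Cons eq by simp
    also have "\<dots> = g (racg_class V E (a#xs))"
      using Cons.prems ga by (simp add: racg_cons hom_mult[OF g])
    finally show ?case .
  qed
  then show ?thesis using xs by simp
qed

lemma induced_eq: assumes mV: "m ` V \<subseteq> V'" and mE: "\<forall>u v. u \<in> V \<longrightarrow> v \<in> V \<longrightarrow> E u v \<longrightarrow> E' (m u) (m v)"
  shows "racg_eq V E xs ys \<Longrightarrow> racg_eq V' E' (map m xs) (map m ys)"
proof (induction rule: racg_eq.induct)
  case (refl xs) then show ?case using mV by (intro racg_eq.refl) auto
next
  case (sym xs ys) then show ?case by (auto intro: racg_eq.sym)
next
  case (trans xs ys zs) then show ?case by (meson racg_eq.trans)
next
  case (cancel_sq xs ys a) then show ?case
    using racg_eq.cancel_sq[of "map m xs" V' "map m ys" "m a" E'] mV by auto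
next
  case (cancel_comm xs ys a b) then show ?case
    using racg_eq.cancel_comm[of "map m xs" V' "map m ys" "m a" "m b" E'] mV mE by auto
qed

lemma induced_class: assumes mV: "m ` V \<subseteq> V'" and mE: "\<forall>u v. u \<in> V \<longrightarrow> v \<in> V \<longrightarrow> E u v \<longrightarrow> E' (m u) (m v)"
  and xs: "set xs \<subseteq> V"
  shows "racg_induced V' E' m (racg_class V E xs) = racg_class V' E' (map m xs)"
  unfolding racg_induced_def racg_class_def
proof safe
  fix zs xs' assume "racg_eq V E xs xs'" "racg_eq V' E' (map m xs') zs"
  then show "racg_eq V' E' (map m xs) zs" using induced_eq[OF mV mE] by (meson racg_eq.trans)
next
  fix zs assume "racg_eq V' E' (map m xs) zs"
  then show "\<exists>xa\<in>{ys. racg_eq V E xs ys}. racg_eq V' E' (map m xa) zs"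
    using xs by (auto intro: racg_eq.refl)
qed

lemma induced_hom: assumes mV: "m ` V \<subseteq> V'" and mE: "\<forall>u v. u \<in> V \<longrightarrow> v \<in> V \<longrightarrow> E u v \<longrightarrow> E' (m u) (m v)"
  shows "racg_induced V' E' m \<in> hom (racg V E) (racg V' E')"
proof (rule homI)
  fix x assume "x \<in> carrier (racg V E)"
  then show "racg_induced V' E' m x \<in> carrier (racg V' E')" using mV
  proof -
    obtain xs where "set xs \<subseteq> V" "x = racg_class V E xs" using \<open>x \<in> carrier (racg V E)\<close> by (auto simp: racg_carrier)
    moreover have "set (map m xs) \<subseteq> V'" using mV image_mono[OF \<open>set xs \<subseteq> V\<close>, of m] by auto
    ultimately show ?thesis unfolding racg_carrier using induced_class[OF mV mE \<open>set xs \<subseteq> V\<close>] by blast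
  qed
next
  fix x y assume "x \<in> carrier (racg V E)" "y \<in> carrier (racg V E)"
  then show "racg_induced V' E' m (x \<otimes>\<^bsub>racg V E\<^esub> y) = racg_induced V' E' m x \<otimes>\<^bsub>racg V' E'\<^esub> racg_induced V' E' m y"
  proof -
    obtain xs ys where a: "set xs \<subseteq> V" "x = racg_class V E xs" "set ys \<subseteq> V" "y = racg_class V E ys"
      using \<open>x \<in> carrier (racg V E)\<close> \<open>y \<in> carrier (racg V E)\<close> by (auto simp: racg_carrier)
    have b: "set (map m xs) \<subseteq> V'" "set (map m ys) \<subseteq> V'"
      using mV image_mono[OF a(1), of m] image_mono[OF a(3), of m] by auto
    show ?thesis using a b by (simp add: induced_class[OF mV mE] racg_mult)
  qed
qed

lemma induced_gen: assumes mV: "m ` V \<subseteq> V'" and mE: "\<forall>u v. u \<in> V \<longrightarrow> v \<in> V \<longrightarrow> E u v \<longrightarrow> E' (m u) (m v)"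
  and v: "v \<in> V" shows "racg_induced V' E' m (racg_gen V E v) = racg_gen V' E' (m v)"
  using induced_class[OF mV mE, of "[v]"] v by (simp add: racg_gen_def)


lemma gen_sq: "v \<in> V \<Longrightarrow> racg_gen V E v \<otimes>\<^bsub>racg V E\<^esub> racg_gen V E v = \<one>\<^bsub>racg V E\<^esub>"
  unfolding racg_gen_def racg_one
  using racg_eq.cancel_sq[of "[]" V "[]" v E]
  by (simp add: racg_mult class_eq)

lemma gen_comm: "u \<in> V \<Longrightarrow> v \<in> V \<Longrightarrow> E u v \<Longrightarrow>
  racg_gen V E u \<otimes>\<^bsub>racg V E\<^esub> racg_gen V E v \<otimes>\<^bsub>racg V E\<^esub> (racg_gen V E u \<otimes>\<^bsub>racg V E\<^esub> racg_gen V E v) = \<one>\<^bsub>racg V E\<^esub>"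
  unfolding racg_gen_def racg_one
  using racg_eq.cancel_comm[of "[]" V "[]" u v E]
  by (simp add: racg_mult class_eq)

lemma hom_rel_ok: assumes H: "group H" and f: "f \<in> hom (racg V E) H"
  shows "rel_ok V E H (\<lambda>v. f (racg_gen V E v))"
  unfolding rel_ok_def
proof (intro conjI ballI allI impI)
  show "(\<lambda>v. f (racg_gen V E v)) ` V \<subseteq> carrier H"
    using hom_in_carrier[OF f gen_carrier] by auto
next
  fix v assume v: "v \<in> V"
  have "f (racg_gen V E v) \<otimes>\<^bsub>H\<^esub> f (racg_gen V E v) = f (racg_gen V E v \<otimes>\<^bsub>racg V E\<^esub> racg_gen V E v)"
    using v by (simp add: hom_mult[OF f] gen_carrier)
  also have "\<dots> = \<one>\<^bsub>H\<^esub>" using v gen_sq[OF v] hom_one[OF f racg_group H] by simp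
  finally show "f (racg_gen V E v) \<otimes>\<^bsub>H\<^esub> f (racg_gen V E v) = \<one>\<^bsub>H\<^esub>" .
next
  fix u v assume uv: "u \<in> V" "v \<in> V" "E u v"
  have G: "group (racg V E)" by (rule racg_group)
  have c: "racg_gen V E u \<in> carrier (racg V E)" "racg_gen V E v \<in> carrier (racg V E)"
    using uv by (auto intro: gen_carrier)
  have "f (racg_gen V E u) \<otimes>\<^bsub>H\<^esub> f (racg_gen V E v) \<otimes>\<^bsub>H\<^esub> (f (racg_gen V E u) \<otimes>\<^bsub>H\<^esub> f (racg_gen V E v))
     = f (racg_gen V E u \<otimes>\<^bsub>racg V E\<^esub> racg_gen V E v \<otimes>\<^bsub>racg V E\<^esub> (racg_gen V E u \<otimes>\<^bsub>racg V E\<^esub> racg_gen V E v))"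
    using c by (simp add: hom_mult[OF f] group.is_monoid[OF G] monoid.m_closed)
  also have "\<dots> = \<one>\<^bsub>H\<^esub>" using gen_comm[where u=u and v=v and V=V and E=E, OF uv] hom_one[OF f racg_group H] by simp
  finally show "f (racg_gen V E u) \<otimes>\<^bsub>H\<^esub> f (racg_gen V E v) \<otimes>\<^bsub>H\<^esub> (f (racg_gen V E u) \<otimes>\<^bsub>H\<^esub> f (racg_gen V E v)) = \<one>\<^bsub>H\<^esub>" .
qed

lemma rel_okI: assumes H: "group H" and c: "m ` V \<subseteq> carrier H"
  and sq: "\<And>v. v \<in> V \<Longrightarrow> m v \<otimes>\<^bsub>H\<^esub> m v = \<one>\<^bsub>H\<^esub>"
  and cm: "\<And>u v. u \<in> V \<Longrightarrow> v \<in> V \<Longrightarrow> E u v \<Longrightarrow> m u = \<one>\<^bsub>H\<^esub> \<or> m v = \<one>\<^bsub>H\<^esub> \<or>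
      m u \<otimes>\<^bsub>H\<^esub> m v \<otimes>\<^bsub>H\<^esub> (m u \<otimes>\<^bsub>H\<^esub> m v) = \<one>\<^bsub>H\<^esub>"
  shows "rel_ok V E H m"
  unfolding rel_ok_def
proof (intro conjI ballI allI impI c sq)
  interpret group H by (rule H)
  fix u v assume uv: "u \<in> V" "v \<in> V" "E u v"
  have cu: "m u \<in> carrier H" "m v \<in> carrier H" using c uv by auto
  show "m u \<otimes>\<^bsub>H\<^esub> m v \<otimes>\<^bsub>H\<^esub> (m u \<otimes>\<^bsub>H\<^esub> m v) = \<one>\<^bsub>H\<^esub>"
    using cm[OF uv] sq[of u] sq[of v] uv cu by auto
qed

lemma image_generate: assumes H: "group H" and f: "f \<in> hom (racg V E) H"
  shows "f ` carrier (racg V E) = generate H ((\<lambda>v. f (racg_gen V E v)) ` V)"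
proof
  show "f ` carrier (racg V E) \<subseteq> generate H ((\<lambda>v. f (racg_gen V E v)) ` V)"
  proof
    fix y assume "y \<in> f ` carrier (racg V E)"
    then obtain xs where xs: "set xs \<subseteq> V" "y = f (racg_class V E xs)" by (auto simp: racg_carrier)
    have "f (racg_class V E xs) \<in> generate H ((\<lambda>v. f (racg_gen V E v)) ` V)" using xs(1)
    proof (induction xs)
      case Nil then show ?case
        using hom_one[OF f racg_group H] generate.one by (metis racg_one)
    next
      case (Cons a xs)
      have ga: "racg_gen V E a \<in> carrier (racg V E)" "racg_class V E xs \<in> carrier (racg V E)"
        using Cons.prems gen_carrier[of a V E] by (auto simp: racg_carrier)
      have "f (racg_class V E (a#xs)) = f (racg_gen V E a) \<otimes>\<^bsub>H\<^esub> f (racg_class V E xs)"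
        using Cons.prems ga by (simp add: racg_cons hom_mult[OF f])
      moreover have "f (racg_gen V E a) \<in> generate H ((\<lambda>v. f (racg_gen V E v)) ` V)"
        using Cons.prems by (intro generate.incl) auto
      ultimately show ?case using Cons by (simp add: generate.eng)
    qed
    then show "y \<in> generate H ((\<lambda>v. f (racg_gen V E v)) ` V)" using xs by simp
  qed
next
  show "generate H ((\<lambda>v. f (racg_gen V E v)) ` V) \<subseteq> f ` carrier (racg V E)"
  proof
    fix y assume "y \<in> generate H ((\<lambda>v. f (racg_gen V E v)) ` V)"
    then show "y \<in> f ` carrier (racg V E)"
    proof (induction rule: generate.induct)
      case one
      have "\<one>\<^bsub>H\<^esub> = f \<one>\<^bsub>racg V E\<^esub>" using hom_one[OF f racg_group H] by simp
      moreover have "\<one>\<^bsub>racg V E\<^esub> \<in> carrier (racg V E)"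
        by (rule monoid.one_closed[OF group.is_monoid[OF racg_group]])
      ultimately show ?case by (rule image_eqI)
    next
      case (incl h)
      then obtain v where v: "v \<in> V" "h = f (racg_gen V E v)" by auto
      show ?case unfolding v(2) by (rule imageI[OF gen_carrier[OF v(1)]])
    next
      case (inv h)
      then obtain v where v: "v \<in> V" "h = f (racg_gen V E v)" by auto
      interpret group H by (rule H)
      have hc: "h \<in> carrier H" using v hom_in_carrier[OF f gen_carrier] by auto
      have "h \<otimes>\<^bsub>H\<^esub> h = \<one>\<^bsub>H\<^esub>" using hom_rel_ok[OF H f] v by (simp add: rel_ok_def)
      then have "inv\<^bsub>H\<^esub> h = h" using hc hc by (rule inv_equality)
      moreover have "f (racg_gen V E v) \<in> f ` carrier (racg V E)" by (rule imageI[OF gen_carrier[OF v(1)]])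
      ultimately show ?case using v(2) by simp
    next
      case (eng h1 h2)
      then obtain x1 x2 where "x1 \<in> carrier (racg V E)" "x2 \<in> carrier (racg V E)" "h1 = f x1" "h2 = f x2" by auto
      then have "h1 \<otimes>\<^bsub>H\<^esub> h2 = f (x1 \<otimes>\<^bsub>racg V E\<^esub> x2)" by (simp add: hom_mult[OF f])
      moreover have "x1 \<otimes>\<^bsub>racg V E\<^esub> x2 \<in> carrier (racg V E)"
        using \<open>x1 \<in> _\<close> \<open>x2 \<in> _\<close> by (rule monoid.m_closed[OF group.is_monoid[OF racg_group]])
      ultimately show ?case by (rule image_eqI)
    qed
  qed
qed

lemma id_hom_racg: "(\<lambda>x. x) \<in> hom G G"
  by (rule homI) auto




lemma face_facts: assumes P: "face_structure V E" and F: "kgon_face V E F k c"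
  shows "\<forall>j<k. c j \<in> V - {F}" "inj_on c {..<k}" "\<forall>i<k. \<forall>j<k. E (c i) (c j) \<longleftrightarrow> cyc_adj k i j"
proof -
  show "\<forall>j<k. c j \<in> V - {F}"
  proof (intro allI impI)
    fix j assume j: "j < k"
    have "c j \<in> {a. E F a}" using F j by (auto simp: kgon_face_def)
    then have "E F (c j)" by simp
    then show "c j \<in> V - {F}" using P unfolding face_structure_def by blast
  qed
  show "inj_on c {..<k}" using F by (simp add: kgon_face_def)
  show "\<forall>i<k. \<forall>j<k. E (c i) (c j) \<longleftrightarrow> cyc_adj k i j" using F by (simp add: kgon_face_def)
qed

lemma side:
  assumes cV: "\<forall>j<k. c j \<in> W" and inj: "inj_on c {..<k}"
    and Ec: "\<forall>i<k. \<forall>j<k. E (c i) (c j) \<longleftrightarrow> cyc_adj k i j"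
  shows "racg_induced W E c \<in> hom (racg {..<k} (cyc_adj k)) (racg W E)
    \<and> inj_on (racg_induced W E c) (carrier (racg {..<k} (cyc_adj k)))
    \<and> racg_induced W E c ` carrier (racg {..<k} (cyc_adj k)) = generate (racg W E) (racg_gen W E ` c ` {..<k})
    \<and> (\<forall>i<k. racg_induced W E c (racg_gen {..<k} (cyc_adj k) i) = racg_gen W E (c i))"
proof -
  let ?G = "racg {..<k} (cyc_adj k)" and ?A = "racg W E" and ?j = "racg_induced W E c"
  have mV: "c ` {..<k} \<subseteq> W" using cV by auto
  have mE: "\<forall>u v. u \<in> {..<k} \<longrightarrow> v \<in> {..<k} \<longrightarrow> cyc_adj k u v \<longrightarrow> E (c u) (c v)"
    using Ec by auto
  have hom: "?j \<in> hom ?G ?A" by (rule induced_hom[OF mV mE])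
  have jgen: "\<forall>i<k. ?j (racg_gen {..<k} (cyc_adj k) i) = racg_gen W E (c i)"
    using induced_gen[OF mV mE] by auto
  have GG: "group ?G" "group ?A" by (rule racg_group)+
  define m where "m v = (if v \<in> c ` {..<k} then racg_gen {..<k} (cyc_adj k) (the_inv_into {..<k} c v)
      else \<one>\<^bsub>?G\<^esub>)" for v
  have minv: "m (c i) = racg_gen {..<k} (cyc_adj k) i" if "i < k" for i
    using that inj by (simp add: m_def the_inv_into_f_f)
  have ok: "rel_ok W E ?G m"
  proof (rule rel_okI[OF GG(1)])
    show "m ` W \<subseteq> carrier ?G"
      using the_inv_into_f_f[OF inj] monoid.one_closed[OF group.is_monoid[OF GG(1)]]
      by (auto simp: m_def intro!: gen_carrier)
  next
    fix v assume "v \<in> W"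
    show "m v \<otimes>\<^bsub>?G\<^esub> m v = \<one>\<^bsub>?G\<^esub>"
    proof (cases "v \<in> c ` {..<k}")
      case True
      then obtain i where i: "i < k" "v = c i" by auto
      show ?thesis using i minv gen_sq[of i "{..<k}" "cyc_adj k"] by simp
    next
      case False
      then show ?thesis using monoid.one_closed[OF group.is_monoid[OF GG(1)]]
        by (simp add: m_def monoid.l_one[OF group.is_monoid[OF GG(1)]])
    qed
  next
    fix u v assume uv: "u \<in> W" "v \<in> W" "E u v"
    show "m u = \<one>\<^bsub>?G\<^esub> \<or> m v = \<one>\<^bsub>?G\<^esub> \<or> m u \<otimes>\<^bsub>?G\<^esub> m v \<otimes>\<^bsub>?G\<^esub> (m u \<otimes>\<^bsub>?G\<^esub> m v) = \<one>\<^bsub>?G\<^esub>"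
    proof (cases "u \<in> c ` {..<k} \<and> v \<in> c ` {..<k}")
      case True
      then obtain i j where ij: "i < k" "u = c i" "j < k" "v = c j" by auto
      have "cyc_adj k i j" using Ec ij uv(3) by auto
      then have "m u \<otimes>\<^bsub>?G\<^esub> m v \<otimes>\<^bsub>?G\<^esub> (m u \<otimes>\<^bsub>?G\<^esub> m v) = \<one>\<^bsub>?G\<^esub>"
        using ij minv gen_comm[where u=i and v=j and V="{..<k}" and E="cyc_adj k"] by simp
      then show ?thesis by simp
    next
      case False then show ?thesis by (auto simp: m_def)
    qed
  qed
  define \<rho> where "\<rho> = lift W ?G m"
  have rhom: "\<rho> \<in> hom ?A ?G" unfolding \<rho>_def by (rule lift_hom[OF GG(1) ok])
  have retr: "\<rho> (?j x) = x" if x: "x \<in> carrier ?G" for x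
  proof -
    have "(\<rho> \<circ> ?j) x = (\<lambda>x. x) x"
    proof (rule hom_unique[OF GG(1) hom_compose[OF hom rhom] id_hom_racg _ x])
      fix i assume i: "i \<in> {..<k}"
      have "c i \<in> W" using cV i by auto
      then show "(\<rho> \<circ> ?j) (racg_gen {..<k} (cyc_adj k) i) = racg_gen {..<k} (cyc_adj k) i"
        using i jgen minv lift_gen[OF GG(1) ok] by (simp add: \<rho>_def)
    qed
    then show ?thesis by simp
  qed
  have inj': "inj_on ?j (carrier ?G)" by (rule inj_on_inverseI[of _ \<rho>]) (rule retr)
  have "?j ` carrier ?G = generate ?A ((\<lambda>v. ?j (racg_gen {..<k} (cyc_adj k) v)) ` {..<k})"
    by (rule image_generate[OF GG(2) hom])
  also have "(\<lambda>v. ?j (racg_gen {..<k} (cyc_adj k) v)) ` {..<k} = racg_gen W E ` c ` {..<k}"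
    using jgen by (auto simp: image_image)
  finally show ?thesis using hom inj' jgen by blast
qed

lemma cm_c2: assumes inj: "inj_on c2 {..<k}" and j: "j < k"
  shows "comp_map2 k c1 c2 (c2 j) = Inl (c1 j)"
proof -
  have "(THE i. i < k \<and> c2 j = c2 i) = j"
  proof (rule the_equality)
    show "j < k \<and> c2 j = c2 j" using j by simp
  next
    fix i assume "i < k \<and> c2 j = c2 i"
    then show "i = j" using inj j by (auto dest: inj_onD)
  qed
  then show ?thesis using j by (auto simp: comp_map2_def)
qed

lemma cm_other: "b \<notin> c2 ` {..<k} \<Longrightarrow> comp_map2 k c1 c2 b = Inr b"
  by (auto simp: comp_map2_def)

theorem mainTheorem10:
  fixes V1 :: "'a set" and E1 :: "'a \<Rightarrow> 'a \<Rightarrow> bool" and F1 :: 'a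
    and V2 :: "'b set" and E2 :: "'b \<Rightarrow> 'b \<Rightarrow> bool" and F2 :: 'b
    and k :: nat and c1 :: "nat \<Rightarrow> 'a" and c2 :: "nat \<Rightarrow> 'b"
  assumes P1: "face_structure V1 E1" and P2: "face_structure V2 E2"
    and k3: "3 \<le> k"
    and F1: "kgon_face V1 E1 F1 k c1" and F2: "kgon_face V2 E2 F2 k c2"
  defines "A \<equiv> racg (V1 - {F1}) E1"
    and "B \<equiv> racg (V2 - {F2}) E2"
    and "G \<equiv> racg {..<k} (cyc_adj k)"
    and "P \<equiv> racg (comp_faces V1 F1 V2 F2 k c2) (comp_adj V1 E1 F1 V2 E2 F2 k c1 c2)"
    and "j1 \<equiv> racg_induced (V1 - {F1}) E1 c1"
    and "j2 \<equiv> racg_induced (V2 - {F2}) E2 c2"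
    and "i1 \<equiv> racg_induced (comp_faces V1 F1 V2 F2 k c2) (comp_adj V1 E1 F1 V2 E2 F2 k c1 c2) Inl"
    and "i2 \<equiv> racg_induced (comp_faces V1 F1 V2 F2 k c2) (comp_adj V1 E1 F1 V2 E2 F2 k c1 c2)
                 (comp_map2 k c1 c2)"
  shows "group A \<and> group B \<and> group G \<and> group P
    \<and> j1 \<in> hom G A \<and> inj_on j1 (carrier G)
    \<and> j1 ` carrier G = generate A (racg_gen (V1 - {F1}) E1 ` c1 ` {..<k})
    \<and> j2 \<in> hom G B \<and> inj_on j2 (carrier G)
    \<and> j2 ` carrier G = generate B (racg_gen (V2 - {F2}) E2 ` c2 ` {..<k})
    \<and> i1 \<in> hom A P \<and> i2 \<in> hom B P
    \<and> (\<forall>x\<in>carrier G. i1 (j1 x) = i2 (j2 x))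
    \<and> (\<forall>(H :: ('h, 'm) monoid_scheme) f g. group H \<longrightarrow> f \<in> hom A H \<longrightarrow> g \<in> hom B H \<longrightarrow>
         (\<forall>x\<in>carrier G. f (j1 x) = g (j2 x)) \<longrightarrow>
         (\<exists>h\<in>hom P H. (\<forall>x\<in>carrier A. h (i1 x) = f x) \<and> (\<forall>y\<in>carrier B. h (i2 y) = g y))
         \<and> (\<forall>h h'. h \<in> hom P H \<longrightarrow> h' \<in> hom P H \<longrightarrow>
               (\<forall>x\<in>carrier A. h (i1 x) = h' (i1 x)) \<longrightarrow> (\<forall>y\<in>carrier B. h (i2 y) = h' (i2 y)) \<longrightarrow>
               (\<forall>z\<in>carrier P. h z = h' z)))"
proof -
  define W1 where "W1 = V1 - {F1}"
  define W2 where "W2 = V2 - {F2}"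
  define VP where "VP = comp_faces V1 F1 V2 F2 k c2"
  define EP where "EP = comp_adj V1 E1 F1 V2 E2 F2 k c1 c2"
  define cm where "cm = comp_map2 k c1 c2"
  define K where "K = {..<k}"
  have Ad: "A = racg W1 E1" and Bd: "B = racg W2 E2" and Gd: "G = racg K (cyc_adj k)"
    and Pd: "P = racg VP EP" and j1d: "j1 = racg_induced W1 E1 c1" and j2d: "j2 = racg_induced W2 E2 c2"
    and i1d: "i1 = racg_induced VP EP Inl" and i2d: "i2 = racg_induced VP EP cm"
    by (simp_all add: A_def B_def G_def P_def j1_def j2_def i1_def i2_def W1_def W2_def VP_def EP_def cm_def K_def)
  note ff1 = face_facts[OF P1 F1] and ff2 = face_facts[OF P2 F2]
  have S1: "j1 \<in> hom G A \<and> inj_on j1 (carrier G)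
    \<and> j1 ` carrier G = generate A (racg_gen W1 E1 ` c1 ` K)
    \<and> (\<forall>i<k. j1 (racg_gen K (cyc_adj k) i) = racg_gen W1 E1 (c1 i))"
    unfolding Ad Gd j1d K_def W1_def by (rule side[OF ff1])
  have S2: "j2 \<in> hom G B \<and> inj_on j2 (carrier G)
    \<and> j2 ` carrier G = generate B (racg_gen W2 E2 ` c2 ` K)
    \<and> (\<forall>i<k. j2 (racg_gen K (cyc_adj k) i) = racg_gen W2 E2 (c2 i))"
    unfolding Bd Gd j2d K_def W2_def by (rule side[OF ff2])
  have c1W: "\<forall>j<k. c1 j \<in> W1" using ff1(1) by (simp add: W1_def)
  have c2W: "\<forall>j<k. c2 j \<in> W2" using ff2(1) by (simp add: W2_def)
  have inj2: "inj_on c2 K" using ff2(2) by (simp add: K_def)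
  have cmc: "cm (c2 j) = Inl (c1 j)" if "j < k" for j
    using cm_c2[OF ff2(2) that] by (simp add: cm_def)
  have cmo: "cm b = Inr b" if "b \<notin> c2 ` K" for b
    using cm_other[of b c2 k c1] that by (simp add: cm_def K_def)
  have VPd: "VP = Inl ` W1 \<union> Inr ` (W2 - c2 ` K)"
    by (auto simp: VP_def comp_faces_def W1_def W2_def K_def)
  have cmV: "cm b \<in> VP" if "b \<in> W2" for b
  proof (cases "b \<in> c2 ` K")
    case True
    then obtain j where "j < k" "b = c2 j" by (auto simp: K_def)
    then show ?thesis using cmc c1W by (simp add: VPd)
  next
    case False then show ?thesis using cmo that by (simp add: VPd)
  qed
  have EPd: "EP x y \<longleftrightarrow> (\<exists>a b. a \<in> W1 \<and> b \<in> W1 \<and> E1 a b \<and> x = Inl a \<and> y = Inl b) \<or>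
     (\<exists>a b. a \<in> W2 \<and> b \<in> W2 \<and> E2 a b \<and> x = cm a \<and> y = cm b)" for x y
    by (simp add: EP_def comp_adj_def W1_def W2_def cm_def)
  have i1V: "Inl ` W1 \<subseteq> VP" by (simp add: VPd)
  have i1E: "\<forall>u v. u \<in> W1 \<longrightarrow> v \<in> W1 \<longrightarrow> E1 u v \<longrightarrow> EP (Inl u) (Inl v)"
    by (simp add: EPd)
  have i2V: "cm ` W2 \<subseteq> VP" using cmV by auto
  have i2E: "\<forall>u v. u \<in> W2 \<longrightarrow> v \<in> W2 \<longrightarrow> E2 u v \<longrightarrow> EP (cm u) (cm v)"
    using EPd by blast
  have i1h: "i1 \<in> hom A P" unfolding i1d Ad Pd by (rule induced_hom[OF i1V i1E])
  have i2h: "i2 \<in> hom B P" unfolding i2d Bd Pd by (rule induced_hom[OF i2V i2E])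
  have i1g: "i1 (racg_gen W1 E1 a) = racg_gen VP EP (Inl a)" if "a \<in> W1" for a
    unfolding i1d using induced_gen[OF i1V i1E that] .
  have i2g: "i2 (racg_gen W2 E2 b) = racg_gen VP EP (cm b)" if "b \<in> W2" for b
    unfolding i2d using induced_gen[OF i2V i2E that] .
  have gA: "group A" and gB: "group B" and gG: "group G" and gP: "group P"
    by (simp_all add: Ad Bd Gd Pd racg_group)
  have compat: "\<forall>x\<in>carrier G. i1 (j1 x) = i2 (j2 x)"
  proof
    fix x assume x: "x \<in> carrier G"
    have "(i1 \<circ> j1) x = (i2 \<circ> j2) x"
    proof (rule hom_unique[OF gP[unfolded Pd] _ _ _ x[unfolded Gd]])
      show "i1 \<circ> j1 \<in> hom (racg K (cyc_adj k)) (racg VP EP)"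
        using hom_compose[OF conjunct1[OF S1] i1h] by (simp add: Gd Pd)
      show "i2 \<circ> j2 \<in> hom (racg K (cyc_adj k)) (racg VP EP)"
        using hom_compose[OF conjunct1[OF S2] i2h] by (simp add: Gd Pd)
      fix v assume v: "v \<in> K"
      then have vk: "v < k" by (simp add: K_def)
      show "(i1 \<circ> j1) (racg_gen K (cyc_adj k) v) = (i2 \<circ> j2) (racg_gen K (cyc_adj k) v)"
        using S1 S2 vk i1g i2g c1W c2W cmc by simp
    qed
    then show "i1 (j1 x) = i2 (j2 x)" by simp
  qed
  have univ: "\<forall>(H :: ('h, 'm) monoid_scheme) f g. group H \<longrightarrow> f \<in> hom A H \<longrightarrow> g \<in> hom B H \<longrightarrow>
         (\<forall>x\<in>carrier G. f (j1 x) = g (j2 x)) \<longrightarrow>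
         (\<exists>h\<in>hom P H. (\<forall>x\<in>carrier A. h (i1 x) = f x) \<and> (\<forall>y\<in>carrier B. h (i2 y) = g y))
         \<and> (\<forall>h h'. h \<in> hom P H \<longrightarrow> h' \<in> hom P H \<longrightarrow>
               (\<forall>x\<in>carrier A. h (i1 x) = h' (i1 x)) \<longrightarrow> (\<forall>y\<in>carrier B. h (i2 y) = h' (i2 y)) \<longrightarrow>
               (\<forall>z\<in>carrier P. h z = h' z))"
  proof (intro allI impI conjI)
    fix H :: "('h, 'm) monoid_scheme" and f g
    assume H: "group H" and f: "f \<in> hom A H" and g: "g \<in> hom B H"
      and fg: "\<forall>x\<in>carrier G. f (j1 x) = g (j2 x)"
    have fA: "f \<in> hom (racg W1 E1) H" using f by (simp add: Ad)
    have gB: "g \<in> hom (racg W2 E2) H" using g by (simp add: Bd)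
    note okf = hom_rel_ok[OF H fA] and okg = hom_rel_ok[OF H gB]
    define mP where "mP x = (case x of Inl a \<Rightarrow> f (racg_gen W1 E1 a) | Inr b \<Rightarrow> g (racg_gen W2 E2 b))" for x
    have key: "mP (cm b) = g (racg_gen W2 E2 b)" if b: "b \<in> W2" for b
    proof (cases "b \<in> c2 ` K")
      case True
      then obtain j where j: "j < k" "b = c2 j" by (auto simp: K_def)
      have gj: "racg_gen K (cyc_adj k) j \<in> carrier G" using j by (simp add: Gd K_def gen_carrier)
      have "mP (cm b) = f (racg_gen W1 E1 (c1 j))" using j cmc by (simp add: mP_def)
      also have "\<dots> = f (j1 (racg_gen K (cyc_adj k) j))" using S1 j by simp
      also have "\<dots> = g (j2 (racg_gen K (cyc_adj k) j))" using fg gj by simp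
      also have "\<dots> = g (racg_gen W2 E2 b)" using S2 j by simp
      finally show ?thesis .
    next
      case False then show ?thesis using cmo by (simp add: mP_def)
    qed
    have okP: "rel_ok VP EP H mP"
      unfolding rel_ok_def
    proof (intro conjI ballI allI impI)
      show "mP ` VP \<subseteq> carrier H"
        using okf okg by (auto simp: VPd mP_def rel_ok_def)
    next
      fix v assume "v \<in> VP"
      then show "mP v \<otimes>\<^bsub>H\<^esub> mP v = \<one>\<^bsub>H\<^esub>"
        using okf okg by (auto simp: VPd mP_def rel_ok_def)
    next
      fix u v assume uv: "u \<in> VP" "v \<in> VP" "EP u v"
      show "mP u \<otimes>\<^bsub>H\<^esub> mP v \<otimes>\<^bsub>H\<^esub> (mP u \<otimes>\<^bsub>H\<^esub> mP v) = \<one>\<^bsub>H\<^esub>"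
        using uv(3) unfolding EPd
      proof (elim disjE exE conjE)
        fix a b assume "a \<in> W1" "b \<in> W1" "E1 a b" "u = Inl a" "v = Inl b"
        then show ?thesis using okf unfolding rel_ok_def by (simp add: mP_def)
      next
        fix a b assume "a \<in> W2" "b \<in> W2" "E2 a b" "u = cm a" "v = cm b"
        then show ?thesis using okg key unfolding rel_ok_def by simp
      qed
    qed
    define h where "h = lift VP H mP"
    have hP: "h \<in> hom P H" unfolding h_def Pd by (rule lift_hom[OF H okP])
    have hgen: "h (racg_gen VP EP v) = mP v" if "v \<in> VP" for v
      unfolding h_def by (rule lift_gen[OF H okP that])
    have hf: "\<forall>x\<in>carrier A. h (i1 x) = f x"
    proof
      fix x assume x: "x \<in> carrier A"
      have "(h \<circ> i1) x = f x"
      proof (rule hom_unique[OF H _ fA _ x[unfolded Ad]])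
        show "h \<circ> i1 \<in> hom (racg W1 E1) H" using hom_compose[OF i1h hP] by (simp add: Ad)
        fix a assume a: "a \<in> W1"
        show "(h \<circ> i1) (racg_gen W1 E1 a) = f (racg_gen W1 E1 a)"
          using a i1g hgen i1V by (auto simp: mP_def)
      qed
      then show "h (i1 x) = f x" by simp
    qed
    have hg: "\<forall>y\<in>carrier B. h (i2 y) = g y"
    proof
      fix x assume x: "x \<in> carrier B"
      have "(h \<circ> i2) x = g x"
      proof (rule hom_unique[OF H _ gB _ x[unfolded Bd]])
        show "h \<circ> i2 \<in> hom (racg W2 E2) H" using hom_compose[OF i2h hP] by (simp add: Bd)
        fix b assume b: "b \<in> W2"
        show "(h \<circ> i2) (racg_gen W2 E2 b) = g (racg_gen W2 E2 b)"
          using b i2g hgen cmV key by simp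
      qed
      then show "h (i2 x) = g x" by simp
    qed
    show "\<exists>h\<in>hom P H. (\<forall>x\<in>carrier A. h (i1 x) = f x) \<and> (\<forall>y\<in>carrier B. h (i2 y) = g y)"
      using hP hf hg by blast
  next
    fix H :: "('h, 'm) monoid_scheme" and f g h h'
    assume H: "group H" and h: "h \<in> hom P H" and h': "h' \<in> hom P H"
      and e1: "\<forall>x\<in>carrier A. h (i1 x) = h' (i1 x)" and e2: "\<forall>y\<in>carrier B. h (i2 y) = h' (i2 y)"
    show "\<forall>z\<in>carrier P. h z = h' z"
    proof
      fix z assume z: "z \<in> carrier P"
      show "h z = h' z"
      proof (rule hom_unique[OF H h[unfolded Pd] h'[unfolded Pd] _ z[unfolded Pd]])
        fix v assume v: "v \<in> VP"
        have "v \<in> Inl ` W1 \<or> v \<in> Inr ` (W2 - c2 ` K)" using v by (simp add: VPd)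
        then show "h (racg_gen VP EP v) = h' (racg_gen VP EP v)"
        proof
          assume "v \<in> Inl ` W1"
          then obtain a where a: "v = Inl a" "a \<in> W1" by auto
          have "racg_gen W1 E1 a \<in> carrier A" using a by (simp add: Ad gen_carrier)
          then show ?thesis using e1 i1g a by force
        next
          assume "v \<in> Inr ` (W2 - c2 ` K)"
          then obtain b where b: "v = Inr b" "b \<in> W2 - c2 ` K" by auto
          have "racg_gen W2 E2 b \<in> carrier B" using b by (simp add: Bd gen_carrier)
          moreover have "i2 (racg_gen W2 E2 b) = racg_gen VP EP v" using b i2g cmo by simp
          ultimately show ?thesis using e2 by force
        qed
      qed
    qed
  qed
  show ?thesis
    using gA gB gG gP S1[unfolded W1_def K_def] S2[unfolded W2_def K_def] i1h i2h compat univ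
    by (intro conjI) blast+
qed


end
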